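(* For every integer $m\geq 0$, $\Lambda_m\subseteq S_m$.
   Context: $\mathbb{N}=\{1,2,3,\dots\}$, $\mathbb{N}_0=\mathbb{N}\cup\{0\}$. The Collatz map $T:\mathbb{N}\to\mathbb{N}$ is $T(n)=\frac{3n+1}{2}$ if $n$ is odd and $T(n)=\frac{n}{2}$ if $n$ is even; $T^{(k)}$ denotes the $k$-fold composition. The total stopping time is $\sigma_\infty(1)=0$ and, for $n\geq 2$, $\sigma_\infty(n)=\inf\{k\in\mathbb{N}\cup\{\infty\} : T^{(k)}(n)=1\}$. Let $S_0=\{1\}$ and $S_k=\{n\in\mathbb{N}:\sigma_\infty(n)=k\}$ for $k\geq 1$. For $0\leq m\leq 3$ let $\Lambda_m=\{2^m\}$, and for $m\geq 4$ let $\Lambda_m$ be the set of all $n\in\mathbb{N}$ that can be written as $n=\frac{2^m}{3^l}-\sum_{k=1}^{l}\frac{2^{b_k}}{3^k}$ for some integers $l,b_1,\dots,b_l\in\mathbb{N}_0$ with $0\leq l\leq m-3$ and $0\leq b_1<b_2<\cdots<b_l\leq m-4$. *)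

theory Defs
  imports Complex_Main "HOL-Library.Extended_Nat"
begin

definition collatzT :: "nat \<Rightarrow> nat" where
  "collatzT n = (if odd n then (3 * n + 1) div 2 else n div 2)"

text \<open>Total stopping time: 0 at n = 1, otherwise the infimum over k \<ge> 1 with
  T^k(n) = 1, taken in the extended naturals (infimum of the empty set is \<infinity>).\<close>
definition sigma_inf :: "nat \<Rightarrow> enat" where
  "sigma_inf n = (if n = 1 then 0
     else (INF k \<in> {k::nat. 1 \<le> k \<and> (collatzT ^^ k) n = 1}. enat k))"

definition S :: "nat \<Rightarrow> nat set" where
  "S k = (if k = 0 then {1} else {n. 1 \<le> n \<and> sigma_inf n = enat k})"

definition Lambda :: "nat \<Rightarrow> nat set" where
  "Lambda m = (if m \<le> 3 then {2 ^ m} else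
     {n. 1 \<le> n \<and> (\<exists>(l::nat) (b::nat \<Rightarrow> nat). l \<le> m - 3 \<and>
          (\<forall>k. 1 \<le> k \<and> k < l \<longrightarrow> b k < b (k + 1)) \<and>
          (\<forall>k. 1 \<le> k \<and> k \<le> l \<longrightarrow> b k \<le> m - 4) \<and>
          (real n = 2 ^ m / 3 ^ l - (\<Sum>k = 1..l. 2 ^ (b k) / 3 ^ k)))})"

end

theory Submission
  imports Defs
begin

definition R :: "nat \<Rightarrow> (nat \<Rightarrow> nat) \<Rightarrow> nat" where
  "R l b = (\<Sum>k=1..l. 2 ^ (b k) * 3 ^ (l - k))"

definition G :: "nat \<Rightarrow> nat set" where
  "G m = {n. 1 \<le> n \<and> (\<exists>(l::nat) (b::nat \<Rightarrow> nat). l \<le> m - 3 \<and>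
          (\<forall>k. 1 \<le> k \<and> k < l \<longrightarrow> b k < b (k + 1)) \<and>
          (\<forall>k. 1 \<le> k \<and> k \<le> l \<longrightarrow> b k \<le> m - 4) \<and>
          3 ^ l * n + R l b = 2 ^ m)}"

lemma T_odd: "odd x \<Longrightarrow> collatzT x = (3 * x + 1) div 2"
  by (simp add: collatzT_def)

lemma T_even: "even x \<Longrightarrow> collatzT x = x div 2"
  by (simp add: collatzT_def)

lemma pow2_iter: "j \<le> m \<Longrightarrow> (collatzT ^^ j) (2 ^ m) = 2 ^ (m - j)"
proof (induction j)
  case 0 then show ?case by simp
next
  case (Suc j)
  then have "(collatzT ^^ j) (2 ^ m) = 2 ^ (m - j)" by simp
  moreover have "m - j = Suc (m - Suc j)" using Suc.prems by simp
  ultimately show ?case by (simp add: T_even)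
qed

lemma sigma_of:
  assumes "1 \<le> m" "(collatzT ^^ m) n = 1" "\<forall>j<m. (collatzT ^^ j) n \<noteq> 1"
  shows "sigma_inf n = enat m"
proof -
  have n1: "n \<noteq> 1" using assms(1,3) by (metis funpow_0 less_le_trans zero_less_one)
  let ?K = "{k::nat. 1 \<le> k \<and> (collatzT ^^ k) n = 1}"
  have "(INF k \<in> ?K. enat k) = enat m"
  proof (rule antisym)
    show "(INF k \<in> ?K. enat k) \<le> enat m" using assms(1,2) by (intro INF_lower) auto
    show "enat m \<le> (INF k \<in> ?K. enat k)"
    proof (rule INF_greatest)
      fix k assume "k \<in> ?K"
      then have "\<not> k < m" using assms(3) by auto
      then show "enat m \<le> enat k" by simp
    qed
  qed
  then show ?thesis using n1 by (simp add: sigma_inf_def)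
qed

lemma incr_mono:
  fixes i j l :: nat and b :: "nat \<Rightarrow> nat"
  assumes "\<forall>k. 1 \<le> k \<and> k < l \<longrightarrow> b k < (b (k + 1) :: nat)"
  shows "1 \<le> i \<Longrightarrow> i < j \<Longrightarrow> j \<le> l \<Longrightarrow> b i < b j"
proof (induction j)
  case 0 then show ?case by simp
next
  case (Suc j)
  show ?case
  proof (cases "i = j")
    case True then show ?thesis using assms Suc.prems by auto
  next
    case False
    then have "b i < b j" using Suc by auto
    moreover have "b j < b (Suc j)" using assms Suc.prems False by auto
    ultimately show ?thesis by simp
  qed
qed

lemma incr_ge:
  assumes "\<forall>k. 1 \<le> k \<and> k < l \<longrightarrow> b k < (b (k + 1) :: nat)" "1 \<le> b 1"
  shows "1 \<le> k \<Longrightarrow> k \<le> l \<Longrightarrow> k \<le> b k"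
proof (induction k)
  case 0 then show ?case by simp
next
  case (Suc k)
  show ?case
  proof (cases "k = 0")
    case True then show ?thesis using assms by simp
  next
    case False
    then have "k \<le> b k" using Suc by auto
    moreover have "b k < b (Suc k)" using assms Suc.prems False by auto
    ultimately show ?thesis by simp
  qed
qed

lemma G3: "n \<in> G 3 \<Longrightarrow> n = 8"
  by (auto simp: G_def R_def)

lemma step:
  assumes m3: "m \<ge> 3" and nG: "n \<in> G (Suc m)"
  shows "collatzT n \<in> G m"
proof -
  from nG obtain l b where n1: "1 \<le> n" and ll: "l \<le> Suc m - 3"
    and incr: "\<forall>k. 1 \<le> k \<and> k < l \<longrightarrow> b k < b (k + 1)"
    and bnd: "\<forall>k. 1 \<le> k \<and> k \<le> l \<longrightarrow> b k \<le> Suc m - 4"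
    and eq: "3 ^ l * n + R l b = 2 ^ Suc m"
    unfolding G_def by blast
  show ?thesis
  proof (cases "l \<ge> 1 \<and> b 1 = 0")
    case True
    then obtain l' where l': "l = Suc l'" by (cases l) auto
    define b' where "b' k = b (k + 1) - 1" for k
    have pos: "1 \<le> b (k + 1)" if "1 \<le> k" "k \<le> l'" for k
      using incr_mono[OF incr, of 1 "k+1"] that True l' by auto
    have "R l b = 2 ^ b 1 * 3 ^ (l - 1) + (\<Sum>k=Suc 1..Suc l'. 2 ^ (b k) * 3 ^ (l - k))"
      unfolding R_def l' by (subst sum.atLeast_Suc_atMost) auto
    also have "(\<Sum>k=Suc 1..Suc l'. (2::nat) ^ (b k) * 3 ^ (l - k)) = (\<Sum>k=1..l'. 2 ^ (b (Suc k)) * 3 ^ (l - Suc k))"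
      by (subst sum.shift_bounds_cl_Suc_ivl) (simp add: o_def)
    also have "\<dots> = (\<Sum>k=1..l'. 2 * (2 ^ (b' k) * 3 ^ (l' - k)))"
    proof (rule sum.cong)
      fix k assume "k \<in> {1..l'}"
      then have "1 \<le> b (k+1)" using pos by auto
      then have "(2::nat) ^ b (Suc k) = 2 * 2 ^ b' k" unfolding b'_def
        by (cases "b (Suc k)") auto
      then show "(2::nat) ^ (b (Suc k)) * 3 ^ (l - Suc k) = 2 * (2 ^ (b' k) * 3 ^ (l' - k))"
        using l' by simp
    qed simp
    also have "\<dots> = 2 * R l' b'" unfolding R_def by (simp add: sum_distrib_left)
    finally have Rl: "R l b = 3 ^ l' + 2 * R l' b'" using True l' by simp
    have eq2: "3 ^ l' * (3 * n + 1) + 2 * R l' b' = 2 * 2 ^ m"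
      using eq Rl l' by (simp add: algebra_simps)
    have "even (3 ^ l' * (3 * n + 1) + 2 * R l' b')" using eq2 by simp
    then have "even (3 ^ l' * (3 * n + 1))" by simp
    then have ev: "even (3 * n + 1)" by simp
    then have odd: "odd n" by simp
    define y where "y = (3 * n + 1) div 2"
    have y2: "3 * n + 1 = 2 * y" using ev y_def by simp
    have Ty: "collatzT n = y" using odd y_def T_odd by simp
    from eq2 have "3 ^ l' * (2 * y) + 2 * R l' b' = 2 * 2 ^ m" by (simp only: y2)
    then have "2 * (3 ^ l' * y + R l' b') = 2 * 2 ^ m" by (simp add: algebra_simps)
    then have eqy: "3 ^ l' * y + R l' b' = 2 ^ m" by simp
    show ?thesis unfolding Ty G_def
    proof (intro CollectI conjI exI)
      show "1 \<le> y" using y2 by simp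
      show "l' \<le> m - 3" using ll l' by simp
      show "\<forall>k. 1 \<le> k \<and> k < l' \<longrightarrow> b' k < b' (k + 1)"
      proof (intro allI impI)
        fix k assume k: "1 \<le> k \<and> k < l'"
        then have "b (k+1) < b (k+2)" using incr[rule_format, of "k+1"] l' by simp
        moreover have "1 \<le> b (k+1)" using pos k by auto
        ultimately show "b' k < b' (k + 1)" unfolding b'_def by simp
      qed
      show "\<forall>k. 1 \<le> k \<and> k \<le> l' \<longrightarrow> b' k \<le> m - 4"
      proof (intro allI impI)
        fix k assume k: "1 \<le> k \<and> k \<le> l'"
        then have "b (k+1) \<le> Suc m - 4" using bnd l' by auto
        then show "b' k \<le> m - 4" unfolding b'_def by simp
      qed
      show "3 ^ l' * y + R l' b' = 2 ^ m" by (rule eqy)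
    qed
  next
    case False
    have b1: "1 \<le> b 1" if "1 \<le> l" using False that by auto
    have pos: "1 \<le> b k" if "1 \<le> k" "k \<le> l" for k
    proof (cases "k = 1")
      case True then show ?thesis using b1 that by simp
    next
      case False
      then show ?thesis using incr_mono[OF incr, of 1 k] that b1 by auto
    qed
    have lm: "l \<le> m - 3"
    proof (cases "l = 0")
      case True then show ?thesis by simp
    next
      case False
      then have "l \<le> b l" using incr_ge[OF incr b1] by simp
      moreover have "b l \<le> Suc m - 4" using bnd False by simp
      ultimately show ?thesis by simp
    qed
    define b' where "b' k = b k - 1" for k
    have "R l b = (\<Sum>k=1..l. 2 * (2 ^ (b' k) * 3 ^ (l - k)))"
      unfolding R_def
    proof (rule sum.cong)
      fix k assume "k \<in> {1..l}"
      then have "1 \<le> b k" using pos by auto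
      then have "(2::nat) ^ b k = 2 * 2 ^ b' k" unfolding b'_def
        by (cases "b k") auto
      then show "(2::nat) ^ (b k) * 3 ^ (l - k) = 2 * (2 ^ (b' k) * 3 ^ (l - k))" by simp
    qed simp
    also have "\<dots> = 2 * R l b'" unfolding R_def by (simp add: sum_distrib_left)
    finally have Rl: "R l b = 2 * R l b'" .
    have eq2: "3 ^ l * n + 2 * R l b' = 2 * 2 ^ m" using eq Rl by simp
    have "even (3 ^ l * n + 2 * R l b')" using eq2 by simp
    then have "even (3 ^ l * n)" by simp
    then have ev: "even n" by simp
    define y where "y = n div 2"
    have y2: "n = 2 * y" using ev y_def by simp
    have Ty: "collatzT n = y" using ev y_def T_even by simp
    from eq2 have "3 ^ l * (2 * y) + 2 * R l b' = 2 * 2 ^ m" by (simp only: y2)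
    then have "2 * (3 ^ l * y + R l b') = 2 * 2 ^ m" by (simp add: algebra_simps)
    then have eqy: "3 ^ l * y + R l b' = 2 ^ m" by simp
    show ?thesis unfolding Ty G_def
    proof (intro CollectI conjI exI)
      show "1 \<le> y" using y2 n1 by simp
      show "l \<le> m - 3" by (rule lm)
      show "\<forall>k. 1 \<le> k \<and> k < l \<longrightarrow> b' k < b' (k + 1)"
      proof (intro allI impI)
        fix k assume k: "1 \<le> k \<and> k < l"
        then have "b k < b (k+1)" using incr by auto
        moreover have "1 \<le> b k" using pos k by auto
        ultimately show "b' k < b' (k + 1)" unfolding b'_def by simp
      qed
      show "\<forall>k. 1 \<le> k \<and> k \<le> l \<longrightarrow> b' k \<le> m - 4"
      proof (intro allI impI)
        fix k assume k: "1 \<le> k \<and> k \<le> l"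
        then have "b k \<le> Suc m - 4" using bnd by auto
        then show "b' k \<le> m - 4" unfolding b'_def by simp
      qed
      show "3 ^ l * y + R l b' = 2 ^ m" by (rule eqy)
    qed
  qed
qed

lemma G_traj:
  "n \<in> G (d + 3) \<Longrightarrow> (collatzT ^^ (d + 3)) n = 1 \<and> (\<forall>j<d + 3. (collatzT ^^ j) n \<noteq> 1)"
proof (induction d arbitrary: n)
  case 0
  then have n8: "n = 2 ^ 3" using G3 by simp
  show ?case unfolding n8
  proof
    show "(collatzT ^^ (0 + 3)) (2 ^ 3) = 1" using pow2_iter[of 3 3] by simp
    show "\<forall>j<0 + 3. (collatzT ^^ j) (2 ^ 3) \<noteq> 1"
      using pow2_iter[of _ 3] by simp
  qed
next
  case (Suc d)
  have "collatzT n \<in> G (d + 3)" using step[of "d+3" n] Suc.prems by simp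
  then have IH: "(collatzT ^^ (d + 3)) (collatzT n) = 1"
    "\<forall>j<d + 3. (collatzT ^^ j) (collatzT n) \<noteq> 1" using Suc.IH by auto
  have it: "(collatzT ^^ Suc j) n = (collatzT ^^ j) (collatzT n)" for j
    by (simp add: funpow_Suc_right del: funpow.simps)
  have n1: "n \<noteq> 1"
  proof
    assume "n = 1"
    then have "collatzT n = 2" by (simp add: collatzT_def)
    then show False using IH(2)[rule_format, of 1] by (simp add: collatzT_def)
  qed
  show ?case
  proof
    show "(collatzT ^^ (Suc d + 3)) n = 1" using IH(1) it[of "d+3"] by simp
    show "\<forall>j<Suc d + 3. (collatzT ^^ j) n \<noteq> 1"
    proof (intro allI impI)
      fix j assume j: "j < Suc d + 3"
      show "(collatzT ^^ j) n \<noteq> 1"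
      proof (cases j)
        case 0 then show ?thesis using n1 by simp
      next
        case (Suc i) then show ?thesis using IH(2) it[of i] j by simp
      qed
    qed
  qed
qed

lemma R_real: "real (R l b) = 3 ^ l * (\<Sum>k=1..l. 2 ^ (b k) / 3 ^ k)"
  unfolding R_def of_nat_sum sum_distrib_left
proof (rule sum.cong)
  fix k assume "k \<in> {1..l}"
  then have "(3::real) ^ l = 3 ^ k * 3 ^ (l - k)"
    by (simp add: power_add[symmetric])
  then show "real (2 ^ b k * 3 ^ (l - k)) = 3 ^ l * (2 ^ b k / 3 ^ k)" by simp
qed simp

lemma Lambda_G: "4 \<le> m \<Longrightarrow> n \<in> Lambda m \<Longrightarrow> n \<in> G m"
proof -
  assume m: "4 \<le> m" and "n \<in> Lambda m"
  then obtain l b where n1: "1 \<le> n" and ll: "l \<le> m - 3"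
    and incr: "\<forall>k. 1 \<le> k \<and> k < l \<longrightarrow> b k < b (k + 1)"
    and bnd: "\<forall>k. 1 \<le> k \<and> k \<le> l \<longrightarrow> b k \<le> m - 4"
    and eq: "real n = 2 ^ m / 3 ^ l - (\<Sum>k = 1..l. 2 ^ (b k) / 3 ^ k)"
    unfolding Lambda_def by auto
  have "real (3 ^ l * n + R l b) = 3 ^ l * real n + 3 ^ l * (\<Sum>k=1..l. 2 ^ (b k) / 3 ^ k)"
    using R_real by simp
  also have "\<dots> = 2 ^ m" unfolding eq by (simp add: algebra_simps)
  also have "\<dots> = real (2 ^ m)" by simp
  finally have "3 ^ l * n + R l b = 2 ^ m" by (simp only: of_nat_eq_iff)
  then show "n \<in> G m" unfolding G_def using n1 ll incr bnd by blast
qed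

theorem mainTheorem2:
  fixes m :: nat
  shows "Lambda m \<subseteq> S m"
proof
  fix n assume nL: "n \<in> Lambda m"
  show "n \<in> S m"
  proof (cases "m \<le> 3")
    case True
    then have n: "n = 2 ^ m" using nL unfolding Lambda_def by simp
    show ?thesis
    proof (cases "m = 0")
      case True then show ?thesis using n by (simp add: S_def)
    next
      case False
      have a: "(collatzT ^^ m) (2 ^ m) = 1" using pow2_iter[of m m] by simp
      have b: "\<forall>j<m. (collatzT ^^ j) (2 ^ m) \<noteq> 1"
      proof (intro allI impI)
        fix j assume "j < m"
        then have "(collatzT ^^ j) (2 ^ m) = 2 ^ (m - j)" "m - j \<noteq> 0" using pow2_iter[of j m] by auto
        then show "(collatzT ^^ j) (2 ^ m) \<noteq> 1" by simp
      qed
      have "sigma_inf (2 ^ m) = enat m"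
        using sigma_of[OF _ a b] False by simp
      then show ?thesis using n False by (simp add: S_def)
    qed
  next
    case False
    then have nG: "n \<in> G ((m - 3) + 3)" using Lambda_G nL by simp
    from G_traj[OF this] have "(collatzT ^^ m) n = 1" "\<forall>j<m. (collatzT ^^ j) n \<noteq> 1"
      using False by auto
    then have "sigma_inf n = enat m" using False by (intro sigma_of) auto
    moreover have "1 \<le> n" using nG by (simp add: G_def)
    ultimately show ?thesis using False by (simp add: S_def)
  qed
qed

end
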